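(* Let $P$ be a monic polynomial of degree $\ge1$ such that $\Omega:=\{z\in\mathbb C:|P(z)|<1\}$ is a Jordan domain which is also a quadrature domain. Then $\Omega$ is a disk.
   Context: A Jordan domain $\Omega$ with boundary $\Gamma$ is called a quadrature domain if there is a function $S$ meromorphic in $\Omega$ with finitely many poles, extending continuously to $\Gamma$, such that $S(z)=\bar z$ for $z\in\Gamma$ ($S$ is the Schwarz function of $\Gamma$); the order of $\Omega$ is the number of poles of $S$ in $\Omega$, counted with multiplicity. *)

theory Defs
  imports "HOL-Complex_Analysis.Complex_Analysis" "HOL-Computational_Algebra.Polynomial"
begin

definition jordan_domain :: "complex set \<Rightarrow> bool" where
  "jordan_domain \<Omega> \<longleftrightarrow>
     (\<exists>\<gamma>::real \<Rightarrow> complex. simple_path \<gamma> \<and> pathfinish \<gamma> = pathstart \<gamma> \<and>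
        \<Omega> = inside (path_image \<gamma>))"

text \<open>Quadrature domain: a Jordan domain admitting a Schwarz function, i.e. a function
  meromorphic in the domain with finitely many poles, extending continuously to the
  boundary, and equal to the complex conjugate on the boundary.\<close>
definition quadrature_domain :: "complex set \<Rightarrow> bool" where
  "quadrature_domain \<Omega> \<longleftrightarrow> jordan_domain \<Omega> \<and>
     (\<exists>S::complex \<Rightarrow> complex. \<exists>A. finite A \<and> A \<subseteq> \<Omega> \<and>
        S holomorphic_on (\<Omega> - A) \<and> (\<forall>a\<in>A. is_pole S a) \<and>
        continuous_on (closure \<Omega> - A) S \<and>
        (\<forall>z\<in>frontier \<Omega>. S z = cnj z))"

end

theory Submission
  imports Defs "HOL-Computational_Algebra.Fundamental_Theorem_Algebra"
begin


lemma poly_upper: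
  fixes p :: "complex poly"
  shows "norm (poly p s) \<le> (\<Sum>i\<le>degree p. norm (coeff p i)) * max 1 (norm s) ^ degree p"
proof -
  have "norm (poly p s) \<le> (\<Sum>i\<le>degree p. norm (coeff p i * s ^ i))"
    unfolding poly_altdef by (rule norm_sum)
  also have "\<dots> \<le> (\<Sum>i\<le>degree p. norm (coeff p i) * max 1 (norm s) ^ degree p)"
  proof (rule sum_mono)
    fix i assume "i \<in> {..degree p}"
    then have "norm s ^ i \<le> max 1 (norm s) ^ degree p"
      by (metis atMost_iff le_max_iff_disj max.cobounded2 norm_ge_zero order.trans power_increasing power_mono)
    then show "norm (coeff p i * s ^ i) \<le> norm (coeff p i) * max 1 (norm s) ^ degree p"
      by (simp add: norm_mult norm_power mult_left_mono)
  qed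
  finally show ?thesis by (simp add: sum_distrib_right)
qed

lemma poly_lower:
  fixes p :: "complex poly"
  assumes "lead_coeff p = 1" "degree p \<ge> 1"
  shows "\<exists>R>0. \<forall>s. norm s \<ge> R \<longrightarrow> norm (poly p s) \<ge> norm s ^ degree p / 2"
proof -
  define n where "n = degree p"
  define B where "B = (\<Sum>i<n. norm (coeff p i))"
  have B0: "B \<ge> 0" unfolding B_def by (simp add: sum_nonneg)
  define R where "R = max 1 (2*B)"
  have "\<forall>s. norm s \<ge> R \<longrightarrow> norm (poly p s) \<ge> norm s ^ n / 2"
  proof (intro allI impI)
    fix s :: complex assume sR: "norm s \<ge> R"
    have s1: "norm s \<ge> 1" using sR unfolding R_def by auto
    have split: "poly p s = s ^ n + (\<Sum>i<n. coeff p i * s ^ i)"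
    proof -
      have "poly p s = (\<Sum>i<Suc n. coeff p i * s ^ i)"
        unfolding poly_altdef n_def lessThan_Suc_atMost ..
      also have "\<dots> = (\<Sum>i<n. coeff p i * s ^ i) + coeff p n * s ^ n" by simp
      finally show ?thesis using assms(1) n_def by simp
    qed
    have "norm (\<Sum>i<n. coeff p i * s ^ i) \<le> (\<Sum>i<n. norm (coeff p i) * norm s ^ (n - 1))"
    proof -
      have "norm (\<Sum>i<n. coeff p i * s ^ i) \<le> (\<Sum>i<n. norm (coeff p i * s ^ i))" by (rule norm_sum)
      also have "\<dots> \<le> (\<Sum>i<n. norm (coeff p i) * norm s ^ (n - 1))"
      proof (rule sum_mono)
        fix i assume "i \<in> {..<n}"
        then have "norm s ^ i \<le> norm s ^ (n - 1)" using s1 by (intro power_increasing) auto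
        then show "norm (coeff p i * s ^ i) \<le> norm (coeff p i) * norm s ^ (n - 1)"
          by (simp add: norm_mult norm_power mult_left_mono)
      qed
      finally show ?thesis .
    qed
    also have "\<dots> = B * norm s ^ (n - 1)" unfolding B_def by (simp add: sum_distrib_right)
    also have "\<dots> \<le> (norm s / 2) * norm s ^ (n - 1)"
      using sR unfolding R_def by (intro mult_right_mono) auto
    also have "\<dots> = norm s ^ n / 2"
      using assms(2) n_def by (cases n) (auto simp del: power_Suc simp add: power_Suc[symmetric])
    finally have le: "norm (\<Sum>i<n. coeff p i * s ^ i) \<le> norm s ^ n / 2" .
    have "norm (s ^ n) \<le> norm (poly p s) + norm (\<Sum>i<n. coeff p i * s ^ i)"
      using split norm_triangle_ineq4[of "poly p s" "\<Sum>i<n. coeff p i * s ^ i"] by simp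
    then show "norm (poly p s) \<ge> norm s ^ n / 2" using le by (simp add: norm_power)
  qed
  moreover have "R > 0" unfolding R_def by auto
  ultimately show ?thesis unfolding n_def by blast
qed

lemma pole_local:
  fixes S :: "complex \<Rightarrow> complex"
  assumes "S holomorphic_on (U - {a})" "open U" "a \<in> U" "is_pole S a"
  obtains g r where "nat (- zorder S a) \<ge> 1" "r > 0" "cball a r \<subseteq> U" "g holomorphic_on cball a r"
    "g a \<noteq> 0" "\<And>w. w \<in> cball a r - {a} \<Longrightarrow> S w = g w / (w - a) ^ nat (- zorder S a)"
proof -
  have "zorder S a < 0 \<and> zor_poly S a a \<noteq> 0 \<and> (\<exists>r. r>0 \<and> cball a r \<subseteq> U \<and> zor_poly S a holomorphic_on cball a r
    \<and> (\<forall>w\<in>cball a r - {a}. S w  = zor_poly S a w / (w-a) ^ nat (- zorder S a) \<and> zor_poly S a w \<noteq>0))"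
    by (rule zorder_exist_pole[OF assms])
  then show ?thesis using that by force
qed

lemma pole_vanish:
  fixes S g :: "complex \<Rightarrow> complex" and p :: "complex poly"
  assumes "r > 0" "g holomorphic_on cball a r"
    "\<And>w. w \<in> cball a r - {a} \<Longrightarrow> S w = g w / (w - a) ^ k"
    "M > degree p * k"
  shows "((\<lambda>w. (w - a) ^ M * poly p (S w)) \<longlongrightarrow> 0) (at a)"
proof -
  define F where "F = (\<lambda>w. \<Sum>i\<le>degree p. coeff p i * g w ^ i * (w - a) ^ (M - i * k))"
  have gc: "isCont g a"
    using assms(1,2) holomorphic_on_imp_continuous_on continuous_on_interior[of "cball a r" g a]
    by auto
  have "(F \<longlongrightarrow> F a) (at a)"
    unfolding F_def using gc by (intro tendsto_intros) (auto simp: isCont_def)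
  moreover have "F a = 0"
  proof -
    have "i * k < M" if "i \<le> degree p" for i
      using assms(4) that by (meson le_less_trans mult_le_mono1)
    then show ?thesis unfolding F_def by (auto intro!: sum.neutral)
  qed
  moreover have "\<forall>\<^sub>F w in at a. F w = (w - a) ^ M * poly p (S w)"
    unfolding eventually_at_topological
  proof (intro exI[of _ "ball a r"] conjI ballI impI)
    show "open (ball a r)" "a \<in> ball a r" using assms(1) by auto
    fix w assume w: "w \<in> ball a r" "w \<noteq> a"
    then have Sw: "S w = g w / (w - a) ^ k" using assms(3) by auto
    have nz: "w - a \<noteq> 0" using w by auto
    have "(w - a) ^ M * poly p (S w) = (\<Sum>i\<le>degree p. coeff p i * ((w - a) ^ M * (g w / (w - a) ^ k) ^ i))"
      unfolding poly_altdef Sw sum_distrib_left by (intro sum.cong) (auto simp: algebra_simps)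
    also have "\<dots> = F w" unfolding F_def
    proof (intro sum.cong refl)
      fix i assume "i \<in> {..degree p}"
      then have ik: "i * k < M" using assms(4) by (meson atMost_iff le_less_trans mult_le_mono1)
      have "(w - a) ^ M = (w - a) ^ (k * i) * (w - a) ^ (M - i * k)"
        using ik by (simp add: power_add[symmetric] mult.commute)
      then show "coeff p i * ((w - a) ^ M * (g w / (w - a) ^ k) ^ i) = coeff p i * g w ^ i * (w - a) ^ (M - i * k)"
        using nz by (simp add: power_divide power_mult[symmetric] field_simps)
    qed
    finally show "F w = (w - a) ^ M * poly p (S w)" by simp
  qed
  ultimately show ?thesis using Lim_transform_eventually by fastforce
qed

lemma pole_lower:
  fixes S g :: "complex \<Rightarrow> complex"
  assumes "r > 0" "g holomorphic_on cball a r" "g a \<noteq> 0" "k \<ge> 1"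
    "\<And>w. w \<in> cball a r - {a} \<Longrightarrow> S w = g w / (w - a) ^ k"
  shows "\<forall>\<^sub>F w in at a. norm (S w) \<ge> (norm (g a) / 2) / norm (w - a)"
proof -
  have gc: "isCont g a"
    using assms(1,2) holomorphic_on_imp_continuous_on continuous_on_interior[of "cball a r" g a]
    by auto
  then have "((\<lambda>w. norm (g w)) \<longlongrightarrow> norm (g a)) (at a)"
    by (intro tendsto_intros) (auto simp: isCont_def)
  then have ev1: "\<forall>\<^sub>F w in at a. norm (g w) > norm (g a) / 2"
    using assms(3) by (intro order_tendstoD(1)) auto
  have ev2: "\<forall>\<^sub>F w in at a. w \<in> ball a (min r 1) \<and> w \<noteq> a"
    unfolding eventually_at_topological
    by (intro exI[of _ "ball a (min r 1)"]) (use assms(1) in auto)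
  show ?thesis
  proof (rule eventually_mono[OF eventually_conj[OF ev1 ev2]])
    fix w assume w: "norm (g a) / 2 < norm (g w) \<and> w \<in> ball a (min r 1) \<and> w \<noteq> a"
    then have Sw: "S w = g w / (w - a) ^ k" using assms(5) by auto
    have d0: "norm (w - a) > 0" and d1: "norm (w - a) < 1" using w by (auto simp: dist_norm norm_minus_commute)
    have "norm (w - a) ^ k \<le> norm (w - a) ^ 1"
      using d0 d1 assms(4) by (intro power_decreasing) auto
    then have pk: "norm (w - a) ^ k \<le> norm (w - a)" by simp
    have pk0: "norm (w - a) ^ k > 0" using d0 by simp
    have "(norm (g a) / 2) / norm (w - a) \<le> norm (g w) / norm (w - a)"
      using w d0 by (intro divide_right_mono) auto
    also have "\<dots> \<le> norm (g w) / norm (w - a) ^ k"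
      using pk pk0 d0 by (intro divide_left_mono) auto
    also have "\<dots> = norm (S w)" by (simp add: Sw norm_divide norm_power)
    finally show "norm (S w) \<ge> (norm (g a) / 2) / norm (w - a)" .
  qed
qed

lemma order_ge:
  fixes q :: "complex poly" and f :: "complex \<Rightarrow> complex"
  assumes qa: "poly q a \<noteq> 0" and fq: "\<And>w. f w = (w - a) ^ m * poly q w"
    and evP: "\<forall>\<^sub>F w in at a. norm (f w) \<le> C * norm (w - a) ^ n \<and> w \<noteq> a"
  shows "m \<ge> n"
proof (rule ccontr)
  assume "\<not> m \<ge> n"
  then have mn: "m < n" by (rule not_le[THEN iffD1])
  obtain d where d: "n = Suc (m + d)" using less_imp_Suc_add[OF mn] by (elim exE)
  have nm: "n - m > 0" "n - m = Suc d" unfolding d by simp_all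
  have "\<forall>\<^sub>F w in at a. norm (poly q w) \<le> C * norm (w - a) ^ (n - m)"
  proof (rule eventually_mono[OF evP])
    fix w assume w: "norm (f w) \<le> C * norm (w - a) ^ n \<and> w \<noteq> a"
    have d0: "norm (w - a) ^ m > 0" using w by simp
    have e: "norm (w - a) ^ n = norm (w - a) ^ m * norm (w - a) ^ (n - m)"
      unfolding nm(2) unfolding d by (simp add: power_add)
    have "norm (w - a) ^ m * norm (poly q w) = norm (f w)"
      by (simp add: fq norm_mult norm_power)
    also have "\<dots> \<le> C * norm (w - a) ^ n" using w by blast
    also have "\<dots> = norm (w - a) ^ m * (C * norm (w - a) ^ (n - m))"
      unfolding e by (simp only: mult_ac)
    finally have "norm (w - a) ^ m * norm (poly q w) \<le> norm (w - a) ^ m * (C * norm (w - a) ^ (n - m))" .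
    then show "norm (poly q w) \<le> C * norm (w - a) ^ (n - m)" using d0 by simp
  qed
  note ev = this
  have "((\<lambda>w. C * norm (w - a) ^ (n - m)) \<longlongrightarrow> C * norm (a - a) ^ (n - m)) (at a)"
    by (intro tendsto_intros)
  then have T: "((\<lambda>w. C * norm (w - a) ^ (n - m)) \<longlongrightarrow> 0) (at a)" using nm(2) by simp
  have L1: "(poly q \<longlongrightarrow> 0) (at a)" by (rule Lim_null_comparison[OF ev T])
  have L2: "(poly q \<longlongrightarrow> poly q a) (at a)" using poly_isCont[of a q] unfolding isCont_def .
  have "poly q a = 0" using tendsto_unique[OF at_neq_bot L2 L1] .

  then show False using qa by simp
qed



theorem theorem4p2:
  fixes P :: "complex poly"
  assumes "lead_coeff P = 1"
    and "degree P \<ge> 1"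
    and "jordan_domain {z. cmod (poly P z) < 1}"
    and "quadrature_domain {z. cmod (poly P z) < 1}"
  shows "\<exists>c r. r > 0 \<and> {z. cmod (poly P z) < 1} = ball c r"
proof -
  define \<Omega> where "\<Omega> = {z. cmod (poly P z) < 1}"
  define n where "n = degree P"
  define Pc where "Pc = map_poly cnj P"
  have n1: "n \<ge> 1" using assms(2) n_def by simp
  have degPc: "degree Pc = n" unfolding Pc_def n_def by (rule degree_map_poly) simp
  have lcPc: "lead_coeff Pc = 1" unfolding Pc_def using assms(1) degPc
    by (simp add: coeff_map_poly Pc_def n_def)
  have openO: "open \<Omega>" unfolding \<Omega>_def
    by (intro open_Collect_less continuous_intros continuous_on_poly) 
  obtain R0 where R0: "R0 > 0" "\<And>s. norm s \<ge> R0 \<Longrightarrow> norm (poly P s) \<ge> norm s ^ n / 2"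
    using poly_lower[OF assms(1,2)] n_def by auto
  have boundedO: "bounded \<Omega>"
  proof -
    have "\<Omega> \<subseteq> cball 0 (max R0 2)"
    proof
      fix z assume z: "z \<in> \<Omega>"
      show "z \<in> cball 0 (max R0 2)"
      proof (rule ccontr)
        assume "z \<notin> cball 0 (max R0 2)"
        then have zb: "norm z > max R0 2" by auto
        then have "norm (poly P z) \<ge> norm z ^ n / 2" using R0 by auto
        moreover have "norm z ^ n \<ge> norm z ^ 1"
          using zb n1 by (intro power_increasing) auto
        ultimately have "norm (poly P z) \<ge> 1" using zb by auto
        then show False using z unfolding \<Omega>_def by auto
      qed
    qed
    then show ?thesis using bounded_cball bounded_subset by blast
  qed
  have closO: "closure \<Omega> \<subseteq> {z. cmod (poly P z) \<le> 1}"
    unfolding \<Omega>_def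
    by (intro closure_minimal closed_Collect_le continuous_intros continuous_on_poly) auto
  have front: "cmod (poly P z) = 1 \<and> z \<notin> \<Omega>" if "z \<in> frontier \<Omega>" for z
    using that closO openO unfolding frontier_def interior_open[OF openO] by (auto simp: \<Omega>_def)
  obtain S A where A: "finite A" "A \<subseteq> \<Omega>" and Sholo: "S holomorphic_on (\<Omega> - A)"
    and Spole: "\<forall>a\<in>A. is_pole S a" and Scont: "continuous_on (closure \<Omega> - A) S"
    and Sbd: "\<forall>z\<in>frontier \<Omega>. S z = cnj z"
    using assms(4) unfolding quadrature_domain_def \<Omega>_def[symmetric] by (elim conjE exE) metis
  define kk where "kk = (\<lambda>a. nat (- zorder S a))"
  define M where "M = n * (\<Sum>a\<in>A. kk a) + 1"
  have loc: "\<exists>g r. kk a \<ge> 1 \<and> r > 0 \<and> cball a r \<subseteq> \<Omega> - (A - {a}) \<and> g holomorphic_on cball a r \<and>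
     g a \<noteq> 0 \<and> (\<forall>w\<in>cball a r - {a}. S w = g w / (w - a) ^ kk a)" if aA0: "a \<in> A" for a
  proof -
    have h1: "open (\<Omega> - (A - {a}))" using openO A(1) by (intro open_Diff finite_imp_closed) auto
    have h2: "S holomorphic_on (\<Omega> - (A - {a}) - {a})"
      using Sholo by (rule holomorphic_on_subset) auto
    have h3: "a \<in> \<Omega> - (A - {a})" using that A by auto
    obtain r g where gr: "nat (- zorder S a) \<ge> 1" "r > 0" "cball a r \<subseteq> \<Omega> - (A - {a})" "g holomorphic_on cball a r"
    "g a \<noteq> 0" "\<And>w. w \<in> cball a r - {a} \<Longrightarrow> S w = g w / (w - a) ^ nat (- zorder S a)"
      by (rule pole_local[OF h2 h1 h3 Spole[rule_format, OF aA0]]) blast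
    show ?thesis unfolding kk_def by (rule exI[of _ g], rule exI[of _ r]) (use gr in simp)
  qed
  define D where "D = (\<lambda>w. \<Prod>b\<in>A. (w - b) ^ M)"
  define E where "E = (\<lambda>w. D w * (poly P w * poly Pc (S w) - 1))"
  define G where "G = (\<lambda>w. if w \<in> A then 0 else E w)"
  have Elim: "(E \<longlongrightarrow> 0) (at a)" if aA: "a \<in> A" for a
  proof -
    obtain g r where gr: "kk a \<ge> 1" "r > 0" "cball a r \<subseteq> \<Omega> - (A - {a})" "g holomorphic_on cball a r"
     "g a \<noteq> 0" "\<And>w. w \<in> cball a r - {a} \<Longrightarrow> S w = g w / (w - a) ^ kk a"
      using loc[OF aA] by blast
    have Mk: "M > degree Pc * kk a"
    proof -
      have "kk a \<le> (\<Sum>a\<in>A. kk a)" using A(1) aA by (intro member_le_sum) auto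
      then show ?thesis unfolding M_def degPc by (simp add: less_Suc_eq_le)
    qed
    have V: "((\<lambda>w. (w - a) ^ M * poly Pc (S w)) \<longlongrightarrow> 0) (at a)"
      by (rule pole_vanish[OF gr(2,4) gr(6) Mk])
    define D' where "D' = (\<lambda>w. \<Prod>b\<in>A - {a}. (w - b) ^ M)"
    have Eeq: "E w = D' w * ((w - a) ^ M * poly Pc (S w) * poly P w - (w - a) ^ M)" for w
    proof -
      have "D w = (w - a) ^ M * D' w" unfolding D_def D'_def using A(1) aA by (simp add: prod.remove)
      then show ?thesis unfolding E_def by (simp add: algebra_simps)
    qed
    have "((\<lambda>w. D' w * ((w - a) ^ M * poly Pc (S w) * poly P w - (w - a) ^ M)) \<longlongrightarrow>
       D' a * (0 * poly P a - (a - a) ^ M)) (at a)"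
      unfolding D'_def by (intro tendsto_intros V) 
    then show ?thesis unfolding Eeq[abs_def] by (simp add: M_def)
  qed
  have Glim: "(G \<longlongrightarrow> 0) (at a)" if aA: "a \<in> A" for a
  proof -
    have "\<forall>\<^sub>F w in at a. E w = G w"
      unfolding eventually_at_topological
    proof (intro exI[of _ "- (A - {a})"] conjI ballI impI)
      show "open (- (A - {a}))" using A(1) by (intro open_Compl finite_imp_closed) auto
    qed (auto simp: G_def)
    then show ?thesis using Elim[OF aA] by (rule Lim_transform_eventually[rotated])
  qed
  have Econt: "continuous_on (closure \<Omega> - A) E"
    unfolding E_def D_def
    by (intro continuous_intros continuous_on_poly Scont)
  have Gcont: "continuous_on (closure \<Omega>) G"
  proof (subst continuous_on_eq_continuous_within, intro ballI)
    fix x assume x: "x \<in> closure \<Omega>"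
    show "continuous (at x within closure \<Omega>) G"
    proof (cases "x \<in> A")
      case True
      then have "x \<in> interior (closure \<Omega>)"
        using A(2) openO by (meson closure_subset interior_maximal subsetD)
      then have "at x within closure \<Omega> = at x" by (rule at_within_interior)
      then show ?thesis using Glim[OF True] True unfolding continuous_within by (simp add: G_def)
    next
      case False
      have "continuous (at x within closure \<Omega> - A) E"
        using Econt x False continuous_on_eq_continuous_within by blast
      moreover have "at x within closure \<Omega> - A = at x within closure \<Omega>"
        by (rule at_within_nhd[of x "- A"]) (use False A(1) finite_imp_closed in auto)
      ultimately have "(E \<longlongrightarrow> G x) (at x within closure \<Omega>)"
        using False unfolding continuous_within G_def by simp
      moreover have "\<forall>\<^sub>F w in at x within closure \<Omega>. E w = G w"
        unfolding eventually_at_topological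
      proof (intro exI[of _ "- A"] conjI ballI impI)
        show "open (- A)" using A(1) by (intro open_Compl finite_imp_closed) auto
      qed (use False in \<open>auto simp: G_def\<close>)
      ultimately show ?thesis unfolding continuous_within
        by (rule Lim_transform_eventually)
    qed
  qed
  have Gholo: "G holomorphic_on \<Omega>"
  proof (rule no_isolated_singularity'[OF _ _ openO A(1)])
    show "(G \<longlongrightarrow> G z) (at z within \<Omega>)" if "z \<in> A" for z
      using Glim[OF that] that by (auto simp: G_def intro: tendsto_within_subset)
    have "E holomorphic_on \<Omega> - A"
      unfolding E_def D_def by (intro holomorphic_intros poly_holomorphic_on Sholo)
    then show "G holomorphic_on \<Omega> - A"
      by (rule holomorphic_transform) (auto simp: G_def)
  qed
  have G0: "G \<xi> = 0" if "\<xi> \<in> \<Omega>" for \<xi>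
  proof -
    have "norm (G \<xi>) \<le> 0"
    proof (rule maximum_modulus_frontier[OF _ Gcont boundedO _ that])
      show "G holomorphic_on interior \<Omega>" using Gholo interior_open[OF openO] by simp
      fix z assume z: "z \<in> frontier \<Omega>"
      have zA: "z \<notin> A" using front[OF z] A(2) by blast
      have Sz: "S z = cnj z" using Sbd z by blast
      have h1: "poly Pc (S z) = cnj (poly P z)" unfolding Sz Pc_def by (rule poly_cnj[symmetric])
      have "poly P z * cnj (poly P z) = complex_of_real ((cmod (poly P z))^2)"
        by (rule complex_norm_square[symmetric])
      also have "\<dots> = 1" using front[OF z] by simp
      finally have h2: "poly P z * poly Pc (S z) = 1" using h1 by simp
      have "G z = D z * (poly P z * poly Pc (S z) - 1)" using zA unfolding G_def E_def by simp
      also have "\<dots> = 0" using h2 by simp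
      finally show "norm (G z) \<le> 0" by simp
    qed
    then show ?thesis by simp
  qed
  have ID: "poly P \<xi> * poly Pc (S \<xi>) = 1" if "\<xi> \<in> \<Omega>" "\<xi> \<notin> A" for \<xi>
  proof -
    have "(\<xi> - b) ^ M \<noteq> 0" if "b \<in> A" for b using that \<open>\<xi> \<notin> A\<close> by auto
    then have "D \<xi> \<noteq> 0" unfolding D_def using A(1) by (simp add: prod_zero_iff)
    moreover have "E \<xi> = 0" using G0[OF that(1)] that(2) unfolding G_def by simp
    ultimately show ?thesis unfolding E_def by (simp only: mult_eq_0_iff right_minus_eq) simp
  qed
  have "\<not> (\<exists>a l. a \<noteq> 0 \<and> l = 0 \<and> P = pCons a l)" using assms(2) by auto
  then obtain a where Pa: "poly P a = 0" using fundamental_theorem_of_algebra_alt by blast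
  have aO: "a \<in> \<Omega>" using Pa unfolding \<Omega>_def by simp
  have aA: "a \<in> A"
  proof (rule ccontr)
    assume "a \<notin> A"
    from ID[OF aO this] Pa show False by simp
  qed
  obtain g r where gr: "kk a \<ge> 1" "r > 0" "cball a r \<subseteq> \<Omega> - (A - {a})" "g holomorphic_on cball a r"
     "g a \<noteq> 0" "\<And>w. w \<in> cball a r - {a} \<Longrightarrow> S w = g w / (w - a) ^ kk a"
    using loc[OF aA] by blast
  define c where "c = norm (g a) / 2"
  have c0: "c > 0" unfolding c_def using gr(5) by simp
  obtain R1 where R1: "R1 > 0" "\<And>s. norm s \<ge> R1 \<Longrightarrow> norm (poly Pc s) \<ge> norm s ^ n / 2"
    using poly_lower[OF lcPc] degPc n1 by auto
  have ev1: "\<forall>\<^sub>F w in at a. norm (S w) \<ge> R1"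
  proof -
    have "filterlim S at_infinity (at a)" using Spole aA unfolding is_pole_def by blast
    then have "filterlim (\<lambda>w. norm (S w)) at_top (at a)" by (rule filterlim_at_infinity_imp_norm_at_top)
    then show ?thesis unfolding filterlim_at_top by blast
  qed
  have ev2: "\<forall>\<^sub>F w in at a. norm (S w) \<ge> c / norm (w - a)"
    unfolding c_def by (rule pole_lower[OF gr(2) gr(4) gr(5) gr(1) gr(6)])
  have ev3: "\<forall>\<^sub>F w in at a. w \<in> ball a r \<and> w \<noteq> a"
    unfolding eventually_at_topological
    by (intro exI[of _ "ball a r"]) (use gr(2) in auto)
  define C where "C = 2 / c ^ n"
  have evP: "\<forall>\<^sub>F w in at a. norm (poly P w) \<le> C * norm (w - a) ^ n \<and> w \<noteq> a"
  proof (rule eventually_mono[OF eventually_conj[OF ev1 eventually_conj[OF ev2 ev3]]])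
    fix w assume w: "R1 \<le> norm (S w) \<and> c / norm (w - a) \<le> norm (S w) \<and> w \<in> ball a r \<and> w \<noteq> a"
    have "w \<in> cball a r" using w by auto
    then have "w \<in> \<Omega> - (A - {a})" using gr(3) by blast
    then have wO: "w \<in> \<Omega>" "w \<notin> A" using w by auto
    have d0: "norm (w - a) > 0" using w by simp
    have "norm (poly P w) * norm (poly Pc (S w)) = 1"
      using ID[OF wO] by (metis norm_mult norm_one)
    moreover have lo: "norm (poly Pc (S w)) \<ge> norm (S w) ^ n / 2" using R1(2) w by blast
    moreover have "(c / norm (w - a)) ^ n \<le> norm (S w) ^ n"
      using w c0 d0 by (intro power_mono) auto
    moreover have pos: "(c / norm (w - a)) ^ n > 0" using c0 d0 by simp
    ultimately have "norm (poly P w) * ((c / norm (w - a)) ^ n / 2) \<le> 1"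
      by (smt (verit, ccfv_SIG) divide_right_mono mult_left_mono norm_ge_zero)
    moreover have pos2: "(c / norm (w - a)) ^ n / 2 > 0" using pos by simp
    ultimately have "norm (poly P w) \<le> 1 / ((c / norm (w - a)) ^ n / 2)"
      by (subst pos_le_divide_eq[OF pos2])
    also have "\<dots> = C * norm (w - a) ^ n"
      unfolding C_def using c0 d0 by (simp add: field_simps power_divide)
    finally show "norm (poly P w) \<le> C * norm (w - a) ^ n \<and> w \<noteq> a" using w by simp
  qed
  have P0: "P \<noteq> 0" using assms(2) by auto
  define m where "m = order a P"
  obtain q where Pq: "P = [:- a, 1:] ^ m * q" and qd: "\<not> [:- a, 1:] dvd q"
    using order_decomp[OF P0] m_def by blast
  have qa: "poly q a \<noteq> 0" using qd by (simp add: poly_eq_0_iff_dvd)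
  have q0: "q \<noteq> 0" using qa by auto
  have polyPq: "poly P w = (w - a) ^ m * poly q w" for w
    unfolding Pq by (simp add: poly_mult poly_power)
  have mn: "m \<ge> n" by (rule order_ge[OF qa polyPq evP])
  have "degree P = m + degree q"
    unfolding Pq using q0 by (simp add: degree_mult_eq degree_linear_power)
  then have dq: "degree q = 0" "m = n" using mn n_def by auto
  have "lead_coeff P = lead_coeff q" unfolding Pq by (simp add: lead_coeff_mult lead_coeff_power)
  then have "lead_coeff q = 1" using assms(1) by simp
  then have "q = 1" using dq(1) by (metis coeff_pCons_0 degree_eq_zeroE one_pCons)
  then have polyP: "poly P w = (w - a) ^ n" for w using polyPq dq(2) by simp
  have "\<Omega> = ball a 1"
  proof (intro set_eqI)
    fix z
    have "z \<in> \<Omega> \<longleftrightarrow> norm (z - a) ^ n < 1" unfolding \<Omega>_def by (simp add: polyP norm_power)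
    also have "\<dots> \<longleftrightarrow> norm (z - a) < 1" using n1 by (simp add: power_less_one_iff)
    finally show "z \<in> \<Omega> \<longleftrightarrow> z \<in> ball a 1" by (simp add: dist_norm norm_minus_commute)
  qed
  then show ?thesis unfolding \<Omega>_def by (intro exI[of _ a] exI[of _ "1::real"]) simp
qed

end
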